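(* Let $\mathcal C$ be an additive strict symmetric monoidal category and let $(L,\ell)$ be a Lie algebra in $\mathcal C$. If $L$ is derived nilpotent, then $L$ is solvable.
   Context: Standing conventions: $\mathcal C$ is an additive symmetric monoidal category (taken strict), with symmetric braiding $c$ (so $c_{V,U}\circ c_{U,V}=\mathrm{id}_{U\otimes V}$); the tensor product is additive in each argument. For an object $U$ put $c^{(n)}_U := c_{U^{\otimes(n-1)},U}\in\mathrm{End}(U^{\otimes n})$. For $h\in\mathrm{Hom}(U\otimes U,U)$ put $h^{(2)}:=h$ and $h^{(n)}:=h\circ(\mathrm{id}_U\otimes h^{(n-1)})\in\mathrm{Hom}(U^{\otimes n},U)$ for $n>2$. A Lie algebra in $\mathcal C$ is a pair $(L,\ell)$ with $\ell\in\mathrm{Hom}(L\otimes L,L)$ satisfying antisymmetry $\ell\circ(\mathrm{id}_{L\otimes L}+c_{L,L})=0$ and the Jacobi identity $\ell^{(3)}\circ[\mathrm{id}_{L^{\otimes 3}}+c^{(3)}_L+(c^{(3)}_L)^2]=0$. Define $\ell^{[2]}:=\ell$ and $\ell^{[n]}:=\ell\circ(\ell^{[n-1]}\otimes\ell^{[n-1]})\in\mathrm{Hom}(L^{\otimes 2^{n-1}},L)$ for $n>2$. $L$ is solvable iff $\ell^{[n]}=0$ for sufficiently large $n$; $L$ is derived nilpotent iff $\ell^{(n)}\circ\ell^{\otimes n}=0$ for sufficiently large $n$. *)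

theory Defs
  imports Main
begin

text \<open>Comp g f denotes g after f.\<close>

record ('o, 'm) smcat =
  Dom   :: "'m \<Rightarrow> 'o"
  Cod   :: "'m \<Rightarrow> 'o"
  Comp  :: "'m \<Rightarrow> 'm \<Rightarrow> 'm"
  Idm   :: "'o \<Rightarrow> 'm"
  TensO :: "'o \<Rightarrow> 'o \<Rightarrow> 'o"
  TensM :: "'m \<Rightarrow> 'm \<Rightarrow> 'm"
  Unit  :: "'o"
  Br    :: "'o \<Rightarrow> 'o \<Rightarrow> 'm"
  Add   :: "'m \<Rightarrow> 'm \<Rightarrow> 'm"
  Neg   :: "'m \<Rightarrow> 'm"
  Zero  :: "'o \<Rightarrow> 'o \<Rightarrow> 'm"

definition hom :: "('o, 'm) smcat \<Rightarrow> 'o \<Rightarrow> 'o \<Rightarrow> 'm set" where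
  "hom C A B = {f. Dom C f = A \<and> Cod C f = B}"

locale add_sym_mon_cat =
  fixes C :: "('o, 'm) smcat"
  assumes
    comp_hom: "\<And>f g A B D. f \<in> hom C A B \<Longrightarrow> g \<in> hom C B D \<Longrightarrow> Comp C g f \<in> hom C A D"
and id_hom: "\<And>A. Idm C A \<in> hom C A A"
and comp_assoc: "\<And>f g h A B D E. f \<in> hom C A B \<Longrightarrow> g \<in> hom C B D \<Longrightarrow> h \<in> hom C D E \<Longrightarrow>
        Comp C h (Comp C g f) = Comp C (Comp C h g) f"
and id_left: "\<And>f A B. f \<in> hom C A B \<Longrightarrow> Comp C (Idm C B) f = f"
and id_right: "\<And>f A B. f \<in> hom C A B \<Longrightarrow> Comp C f (Idm C A) = f"
and add_hom: "\<And>f g A B. f \<in> hom C A B \<Longrightarrow> g \<in> hom C A B \<Longrightarrow> Add C f g \<in> hom C A B"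
and neg_hom: "\<And>f A B. f \<in> hom C A B \<Longrightarrow> Neg C f \<in> hom C A B"
and zero_hom: "\<And>A B. Zero C A B \<in> hom C A B"
and add_assoc: "\<And>f g h A B. f \<in> hom C A B \<Longrightarrow> g \<in> hom C A B \<Longrightarrow> h \<in> hom C A B \<Longrightarrow>
        Add C (Add C f g) h = Add C f (Add C g h)"
and add_comm: "\<And>f g A B. f \<in> hom C A B \<Longrightarrow> g \<in> hom C A B \<Longrightarrow> Add C f g = Add C g f"
and add_zero: "\<And>f A B. f \<in> hom C A B \<Longrightarrow> Add C f (Zero C A B) = f"
and add_neg: "\<And>f A B. f \<in> hom C A B \<Longrightarrow> Add C f (Neg C f) = Zero C A B"
and comp_add_left: "\<And>f g g' A B D. f \<in> hom C A B \<Longrightarrow> g \<in> hom C B D \<Longrightarrow> g' \<in> hom C B D \<Longrightarrow>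
        Comp C (Add C g g') f = Add C (Comp C g f) (Comp C g' f)"
and comp_add_right: "\<And>f f' g A B D. f \<in> hom C A B \<Longrightarrow> f' \<in> hom C A B \<Longrightarrow> g \<in> hom C B D \<Longrightarrow>
        Comp C g (Add C f f') = Add C (Comp C g f) (Comp C g f')"
and zero_object: "\<exists>Z. Idm C Z = Zero C Z Z"
and biproducts: "\<And>A B. \<exists>S i1 i2 p1 p2. i1 \<in> hom C A S \<and> i2 \<in> hom C B S \<and>
        p1 \<in> hom C S A \<and> p2 \<in> hom C S B \<and>
        Comp C p1 i1 = Idm C A \<and> Comp C p2 i2 = Idm C B \<and>
        Comp C p1 i2 = Zero C B A \<and> Comp C p2 i1 = Zero C A B \<and>
        Add C (Comp C i1 p1) (Comp C i2 p2) = Idm C S"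
and tens_hom: "\<And>f g A B A' B'. f \<in> hom C A B \<Longrightarrow> g \<in> hom C A' B' \<Longrightarrow>
        TensM C f g \<in> hom C (TensO C A A') (TensO C B B')"
and tens_id: "\<And>A B. TensM C (Idm C A) (Idm C B) = Idm C (TensO C A B)"
and tens_comp: "\<And>f g f' g' A B D A' B' D'. f \<in> hom C A B \<Longrightarrow> g \<in> hom C B D \<Longrightarrow>
        f' \<in> hom C A' B' \<Longrightarrow> g' \<in> hom C B' D' \<Longrightarrow>
        TensM C (Comp C g f) (Comp C g' f') = Comp C (TensM C g g') (TensM C f f')"
and tensO_assoc: "\<And>A B D. TensO C (TensO C A B) D = TensO C A (TensO C B D)"
and tensO_unit_left: "\<And>A. TensO C (Unit C) A = A"
and tensO_unit_right: "\<And>A. TensO C A (Unit C) = A"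
and tensM_assoc: "\<And>f g h. TensM C (TensM C f g) h = TensM C f (TensM C g h)"
and tensM_unit_left: "\<And>f. TensM C (Idm C (Unit C)) f = f"
and tensM_unit_right: "\<And>f. TensM C f (Idm C (Unit C)) = f"
and tens_add_left: "\<And>f f' g A B A' B'. f \<in> hom C A B \<Longrightarrow> f' \<in> hom C A B \<Longrightarrow> g \<in> hom C A' B' \<Longrightarrow>
        TensM C (Add C f f') g = Add C (TensM C f g) (TensM C f' g)"
and tens_add_right: "\<And>f g g' A B A' B'. f \<in> hom C A B \<Longrightarrow> g \<in> hom C A' B' \<Longrightarrow> g' \<in> hom C A' B' \<Longrightarrow>
        TensM C f (Add C g g') = Add C (TensM C f g) (TensM C f g')"
and br_hom: "\<And>A B. Br C A B \<in> hom C (TensO C A B) (TensO C B A)"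
and br_natural: "\<And>f g A A' B B'. f \<in> hom C A A' \<Longrightarrow> g \<in> hom C B B' \<Longrightarrow>
        Comp C (Br C A' B') (TensM C f g) = Comp C (TensM C g f) (Br C A B)"
and br_hexagon1: "\<And>A B D. Br C A (TensO C B D) =
        Comp C (TensM C (Idm C B) (Br C A D)) (TensM C (Br C A B) (Idm C D))"
and br_hexagon2: "\<And>A B D. Br C (TensO C A B) D =
        Comp C (TensM C (Br C A D) (Idm C B)) (TensM C (Idm C A) (Br C B D))"
and br_symm: "\<And>A B. Comp C (Br C B A) (Br C A B) = Idm C (TensO C A B)"

fun tpow :: "('o, 'm) smcat \<Rightarrow> nat \<Rightarrow> 'o \<Rightarrow> 'o" where
  "tpow C 0 U = Unit C"
| "tpow C (Suc n) U = TensO C U (tpow C n U)"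

fun mpow :: "('o, 'm) smcat \<Rightarrow> nat \<Rightarrow> 'm \<Rightarrow> 'm" where
  "mpow C 0 f = Idm C (Unit C)"
| "mpow C (Suc n) f = TensM C f (mpow C n f)"

definition cyc :: "('o, 'm) smcat \<Rightarrow> nat \<Rightarrow> 'o \<Rightarrow> 'm" where
  "cyc C n U = Br C (tpow C (n - 1) U) U"

text \<open>nest C U h k = h^{(k+2)}.\<close>
fun nest :: "('o, 'm) smcat \<Rightarrow> 'o \<Rightarrow> 'm \<Rightarrow> nat \<Rightarrow> 'm" where
  "nest C U h 0 = h"
| "nest C U h (Suc k) = Comp C h (TensM C (Idm C U) (nest C U h k))"

definition hpow :: "('o, 'm) smcat \<Rightarrow> 'o \<Rightarrow> 'm \<Rightarrow> nat \<Rightarrow> 'm" where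
  "hpow C U h n = nest C U h (n - 2)"

text \<open>dnest C l k = l^{[k+2]}.\<close>
fun dnest :: "('o, 'm) smcat \<Rightarrow> 'm \<Rightarrow> nat \<Rightarrow> 'm" where
  "dnest C l 0 = l"
| "dnest C l (Suc k) = Comp C l (TensM C (dnest C l k) (dnest C l k))"

definition dpow :: "('o, 'm) smcat \<Rightarrow> 'm \<Rightarrow> nat \<Rightarrow> 'm" where
  "dpow C l n = dnest C l (n - 2)"

definition lie_algebra :: "('o, 'm) smcat \<Rightarrow> 'o \<Rightarrow> 'm \<Rightarrow> bool" where
  "lie_algebra C L l \<longleftrightarrow>
     l \<in> hom C (TensO C L L) L \<and>
     Comp C l (Add C (Idm C (TensO C L L)) (Br C L L)) = Zero C (TensO C L L) L \<and>
     Comp C (hpow C L l 3)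
        (Add C (Add C (Idm C (tpow C 3 L)) (cyc C 3 L)) (Comp C (cyc C 3 L) (cyc C 3 L)))
       = Zero C (tpow C 3 L) L"

definition solvable :: "('o, 'm) smcat \<Rightarrow> 'o \<Rightarrow> 'm \<Rightarrow> bool" where
  "solvable C L l \<longleftrightarrow> (\<exists>N. \<forall>n\<ge>N. dpow C l n = Zero C (tpow C (2 ^ (n - 1)) L) L)"

definition derived_nilpotent :: "('o, 'm) smcat \<Rightarrow> 'o \<Rightarrow> 'm \<Rightarrow> bool" where
  "derived_nilpotent C L l \<longleftrightarrow>
     (\<exists>N. \<forall>n\<ge>N. Comp C (hpow C L l n) (mpow C n l) = Zero C (tpow C n (TensO C L L)) L)"

end

theory Submission
  imports Defs
begin

context add_sym_mon_cat
begin

lemma idem_zero: assumes "x \<in> hom C A B" "Add C x x = x" shows "x = Zero C A B"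
proof -
  have "Zero C A B = Add C x (Neg C x)" using add_neg assms(1) by simp
  also have "\<dots> = Add C (Add C x x) (Neg C x)" using assms(2) by simp
  also have "\<dots> = Add C x (Add C x (Neg C x))" using add_assoc assms(1) neg_hom by blast
  also have "\<dots> = x" using add_neg add_zero assms by simp
  finally show ?thesis by simp
qed

lemma zero_comp: assumes "\<phi> \<in> hom C A B" shows "Comp C (Zero C B D) \<phi> = Zero C A D"
proof (rule idem_zero)
  show "Comp C (Zero C B D) \<phi> \<in> hom C A D" using comp_hom assms zero_hom by blast
  have "Add C (Zero C B D) (Zero C B D) = Zero C B D" by (rule add_zero[OF zero_hom])
  then show "Add C (Comp C (Zero C B D) \<phi>) (Comp C (Zero C B D) \<phi>) = Comp C (Zero C B D) \<phi>"
    using comp_add_left[OF assms zero_hom[of B D] zero_hom[of B D]] by simp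
qed

lemma comp_zero: assumes "g \<in> hom C B D" shows "Comp C g (Zero C A B) = Zero C A D"
proof (rule idem_zero)
  show "Comp C g (Zero C A B) \<in> hom C A D" using comp_hom assms zero_hom by blast
  have "Add C (Zero C A B) (Zero C A B) = Zero C A B" by (rule add_zero[OF zero_hom])
  then show "Add C (Comp C g (Zero C A B)) (Comp C g (Zero C A B)) = Comp C g (Zero C A B)"
    using comp_add_right[OF zero_hom[of A B] zero_hom[of A B] assms] by simp
qed

lemma tens_zero_left: assumes "g \<in> hom C A' B'"
  shows "TensM C (Zero C A B) g = Zero C (TensO C A A') (TensO C B B')"
proof (rule idem_zero)
  show "TensM C (Zero C A B) g \<in> hom C (TensO C A A') (TensO C B B')" using tens_hom assms zero_hom by blast
  have "Add C (Zero C A B) (Zero C A B) = Zero C A B" by (rule add_zero[OF zero_hom])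
  then show "Add C (TensM C (Zero C A B) g) (TensM C (Zero C A B) g) = TensM C (Zero C A B) g"
    using tens_add_left[OF zero_hom[of A B] zero_hom[of A B] assms] by simp
qed

lemma tens_zero_right: assumes "f \<in> hom C A B"
  shows "TensM C f (Zero C A' B') = Zero C (TensO C A A') (TensO C B B')"
proof (rule idem_zero)
  show "TensM C f (Zero C A' B') \<in> hom C (TensO C A A') (TensO C B B')" using tens_hom assms zero_hom by blast
  have "Add C (Zero C A' B') (Zero C A' B') = Zero C A' B'" by (rule add_zero[OF zero_hom])
  then show "Add C (TensM C f (Zero C A' B')) (TensM C f (Zero C A' B')) = TensM C f (Zero C A' B')"
    using tens_add_right[OF assms zero_hom[of A' B'] zero_hom[of A' B']] by simp
qed

lemma neg_unique: assumes a: "a \<in> hom C A B" and b: "b \<in> hom C A B" and s: "Add C a b = Zero C A B"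
  shows "b = Neg C a"
proof -
  have na: "Neg C a \<in> hom C A B" using neg_hom a by blast
  have "Neg C a = Add C (Neg C a) (Zero C A B)" using add_zero na by simp
  also have "\<dots> = Add C (Neg C a) (Add C a b)" using s by simp
  also have "\<dots> = Add C (Add C (Neg C a) a) b" using add_assoc na a b by simp
  also have "\<dots> = Add C (Add C a (Neg C a)) b" using add_comm na a by simp
  also have "\<dots> = Add C (Zero C A B) b" using add_neg a by simp
  also have "\<dots> = b" using add_comm add_zero zero_hom b by metis
  finally show ?thesis by simp
qed

lemma neg_neg: assumes a: "a \<in> hom C A B" shows "Neg C (Neg C a) = a"
proof -
  have na: "Neg C a \<in> hom C A B" using neg_hom a by blast
  have "Add C (Neg C a) a = Zero C A B" using add_comm add_neg a na by metis
  then show ?thesis using neg_unique[OF na a] by simp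
qed

lemma neg_zero: "Neg C (Zero C A B) = Zero C A B"
  using neg_unique[OF zero_hom zero_hom add_zero[OF zero_hom]] by simp

lemma comp_neg_right: assumes f: "f \<in> hom C A B" and g: "g \<in> hom C B D"
  shows "Comp C g (Neg C f) = Neg C (Comp C g f)"
proof (rule neg_unique)
  show "Comp C g f \<in> hom C A D" "Comp C g (Neg C f) \<in> hom C A D" using comp_hom neg_hom f g by blast+
  show "Add C (Comp C g f) (Comp C g (Neg C f)) = Zero C A D"
    using comp_add_right[OF f neg_hom[OF f] g] add_neg[OF f] comp_zero[OF g] by simp
qed

lemma comp_neg_left: assumes f: "f \<in> hom C A B" and g: "g \<in> hom C B D"
  shows "Comp C (Neg C g) f = Neg C (Comp C g f)"
proof (rule neg_unique)
  show "Comp C g f \<in> hom C A D" "Comp C (Neg C g) f \<in> hom C A D" using comp_hom neg_hom f g by blast+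
  show "Add C (Comp C g f) (Comp C (Neg C g) f) = Zero C A D"
    using comp_add_left[OF f g neg_hom[OF g]] add_neg[OF g] zero_comp[OF f] by simp
qed

lemma tens_neg_left: assumes f: "f \<in> hom C A B" and g: "g \<in> hom C A' B'"
  shows "TensM C (Neg C f) g = Neg C (TensM C f g)"
proof (rule neg_unique)
  show "TensM C f g \<in> hom C (TensO C A A') (TensO C B B')"
       "TensM C (Neg C f) g \<in> hom C (TensO C A A') (TensO C B B')" using tens_hom neg_hom f g by blast+
  show "Add C (TensM C f g) (TensM C (Neg C f) g) = Zero C (TensO C A A') (TensO C B B')"
    using tens_add_left[OF f neg_hom[OF f] g] add_neg[OF f] tens_zero_left[OF g] by simp
qed

lemma tens_neg_right: assumes f: "f \<in> hom C A B" and g: "g \<in> hom C A' B'"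
  shows "TensM C f (Neg C g) = Neg C (TensM C f g)"
proof (rule neg_unique)
  show "TensM C f g \<in> hom C (TensO C A A') (TensO C B B')"
       "TensM C f (Neg C g) \<in> hom C (TensO C A A') (TensO C B B')" using tens_hom neg_hom f g by blast+
  show "Add C (TensM C f g) (TensM C f (Neg C g)) = Zero C (TensO C A A') (TensO C B B')"
    using tens_add_right[OF f g neg_hom[OF g]] add_neg[OF g] tens_zero_right[OF f] by simp
qed

lemma solve3: assumes a: "a \<in> hom C X Y" and w: "w \<in> hom C X Y" and b: "b \<in> hom C X Y"
  and s: "Add C (Add C a (Neg C w)) b = Zero C X Y"
  shows "w = Add C a b"
proof -
  have nw: "Neg C w \<in> hom C X Y" using neg_hom w by blast
  have ab: "Add C a b \<in> hom C X Y" using add_hom a b by blast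
  have "Add C (Add C a b) (Neg C w) = Add C a (Add C b (Neg C w))" using add_assoc a b nw by simp
  also have "\<dots> = Add C a (Add C (Neg C w) b)" using add_comm b nw by simp
  also have "\<dots> = Add C (Add C a (Neg C w)) b" using add_assoc a b nw by simp
  finally have "Add C (Add C a b) (Neg C w) = Zero C X Y" using s by simp
  then have "Neg C w = Neg C (Add C a b)" using neg_unique[OF ab nw] by simp
  then show ?thesis using neg_neg[OF w] neg_neg[OF ab] by metis
qed

declare tensO_assoc[simp] tensO_unit_left[simp] tensO_unit_right[simp]

lemma tpow_add: "TensO C (tpow C m X) (tpow C n X) = tpow C (m + n) X"
  by (induction m) auto

lemma mpow_hom: "f \<in> hom C A B \<Longrightarrow> mpow C n f \<in> hom C (tpow C n A) (tpow C n B)"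
  by (induction n) (auto intro: tens_hom id_hom)

lemma nest_hom: "h \<in> hom C (TensO C U U) U \<Longrightarrow> nest C U h k \<in> hom C (tpow C (Suc (Suc k)) U) U"
proof (induction k)
  case 0 then show ?case by simp
next
  case (Suc k)
  have "TensM C (Idm C U) (nest C U h k) \<in> hom C (TensO C U (tpow C (Suc (Suc k)) U)) (TensO C U U)"
    using tens_hom[OF id_hom Suc.IH[OF Suc.prems]] by simp
  then show ?case using comp_hom Suc.prems by fastforce
qed

end


fun TT :: "('o, 'm) smcat \<Rightarrow> 'm \<Rightarrow> nat \<Rightarrow> 'm" where
  "TT C l 0 = l"
| "TT C l (Suc k) = Comp C l (TensM C l (TT C l k))"

inductive GG :: "('o, 'm) smcat \<Rightarrow> 'o \<Rightarrow> 'm \<Rightarrow> nat \<Rightarrow> 'o \<Rightarrow> 'm \<Rightarrow> bool" for C L l where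
  gen: "\<phi> \<in> hom C A (tpow C (Suc k) (TensO C L L)) \<Longrightarrow> GG C L l k A (Comp C (TT C l k) \<phi>)"
| add: "GG C L l k A f \<Longrightarrow> GG C L l k A g \<Longrightarrow> GG C L l k A (Add C f g)"
| neg: "GG C L l k A f \<Longrightarrow> GG C L l k A (Neg C f)"

locale lie_ctx = add_sym_mon_cat C for C :: "('o, 'm) smcat" +
  fixes L :: 'o and l :: 'm
  assumes lie: "lie_algebra C L l"
begin

lemma l_hom: "l \<in> hom C (TensO C L L) L"
  using lie unfolding lie_algebra_def by blast

lemma l_br: "Comp C l (Br C L L) = Neg C l"
proof (rule neg_unique[OF l_hom])
  show "Comp C l (Br C L L) \<in> hom C (TensO C L L) L" using comp_hom br_hom l_hom by blast
  have "Comp C l (Add C (Idm C (TensO C L L)) (Br C L L)) = Zero C (TensO C L L) L"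
    using lie unfolding lie_algebra_def by blast
  then show "Add C l (Comp C l (Br C L L)) = Zero C (TensO C L L) L"
    using comp_add_right[OF id_hom br_hom l_hom] id_right[OF l_hom] by simp
qed

lemma br_hom': "u \<in> hom C U L \<Longrightarrow> v \<in> hom C V L \<Longrightarrow> Comp C l (TensM C u v) \<in> hom C (TensO C U V) L"
  using comp_hom tens_hom l_hom by blast

lemma antisym: assumes u: "u \<in> hom C U L" and v: "v \<in> hom C V L"
  shows "Comp C (Comp C l (TensM C v u)) (Br C U V) = Neg C (Comp C l (TensM C u v))"
proof -
  have vu: "TensM C v u \<in> hom C (TensO C V U) (TensO C L L)" using tens_hom u v by blast
  have uv: "TensM C u v \<in> hom C (TensO C U V) (TensO C L L)" using tens_hom u v by blast
  have "Comp C (Comp C l (TensM C v u)) (Br C U V) = Comp C l (Comp C (TensM C v u) (Br C U V))"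
    using comp_assoc[OF br_hom vu l_hom] by simp
  also have "\<dots> = Comp C l (Comp C (Br C L L) (TensM C u v))" using br_natural[OF u v] by simp
  also have "\<dots> = Comp C (Comp C l (Br C L L)) (TensM C u v)"
    using comp_assoc[OF uv br_hom l_hom] by simp
  also have "\<dots> = Neg C (Comp C l (TensM C u v))" using l_br comp_neg_left[OF uv l_hom] by simp
  finally show ?thesis .
qed

lemma br_pre: assumes a: "a \<in> hom C A L" and \<phi>: "\<phi> \<in> hom C A' A" and b: "b \<in> hom C B L"
  and \<psi>: "\<psi> \<in> hom C B' B"
  shows "Comp C l (TensM C (Comp C a \<phi>) (Comp C b \<psi>)) = Comp C (Comp C l (TensM C a b)) (TensM C \<phi> \<psi>)"
proof -
  have "TensM C (Comp C a \<phi>) (Comp C b \<psi>) = Comp C (TensM C a b) (TensM C \<phi> \<psi>)"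
    using tens_comp[OF \<phi> a \<psi> b] .
  then show ?thesis using comp_assoc[OF tens_hom[OF \<phi> \<psi>] tens_hom[OF a b] l_hom] by simp
qed


lemma jac_raw:
  "Comp C (Comp C l (TensM C (Idm C L) l))
     (Add C (Add C (Idm C (TensO C L (TensO C L L))) (Br C (TensO C L L) L))
        (Comp C (Br C (TensO C L L) L) (Br C (TensO C L L) L)))
   = Zero C (TensO C L (TensO C L L)) L"
proof -
  have "hpow C L l 3 = Comp C l (TensM C (Idm C L) l)"
    by (simp add: hpow_def numeral_3_eq_3)
  moreover have "tpow C 3 L = TensO C L (TensO C L L)" by (simp add: numeral_3_eq_3)
  moreover have "cyc C 3 L = Br C (TensO C L L) L" by (simp add: cyc_def numeral_3_eq_3)
  ultimately show ?thesis using lie unfolding lie_algebra_def by simp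
qed

lemma J_app: assumes u: "u \<in> hom C U L" and v: "v \<in> hom C V L" and w: "w \<in> hom C W L"
  shows "Comp C (Comp C l (TensM C (Idm C L) l)) (TensM C u (TensM C v w))
       = Comp C l (TensM C u (Comp C l (TensM C v w)))"
proof -
  have vw: "TensM C v w \<in> hom C (TensO C V W) (TensO C L L)" using tens_hom v w by blast
  have uvw: "TensM C u (TensM C v w) \<in> hom C (TensO C U (TensO C V W)) (TensO C L (TensO C L L))"
    using tens_hom[OF u vw] .
  have il: "TensM C (Idm C L) l \<in> hom C (TensO C L (TensO C L L)) (TensO C L L)"
    using tens_hom[OF id_hom l_hom] .
  have "Comp C (Comp C l (TensM C (Idm C L) l)) (TensM C u (TensM C v w))
      = Comp C l (Comp C (TensM C (Idm C L) l) (TensM C u (TensM C v w)))"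
    using comp_assoc[OF uvw il l_hom] by simp
  also have "Comp C (TensM C (Idm C L) l) (TensM C u (TensM C v w))
      = TensM C (Comp C (Idm C L) u) (Comp C l (TensM C v w))"
    using tens_comp[OF u id_hom vw l_hom] by simp
  finally show ?thesis using id_left[OF u] by simp
qed

lemma jac_gen:
  assumes x: "x \<in> hom C A L" and y: "y \<in> hom C B L" and z: "z \<in> hom C D L"
  shows "\<exists>\<tau> \<in> hom C (TensO C A (TensO C B D)) (TensO C B (TensO C A D)).
    Comp C l (TensM C (Comp C l (TensM C x y)) z) =
    Add C (Comp C l (TensM C x (Comp C l (TensM C y z))))
          (Neg C (Comp C (Comp C l (TensM C y (Comp C l (TensM C x z)))) \<tau>))"
proof -
  define LL where "LL = TensO C L L"
  define J where "J = Comp C l (TensM C (Idm C L) l)"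
  define c where "c = Br C LL L"
  define P where "P = TensM C x (TensM C y z)"
  define W where "W = Comp C l (TensM C (Comp C l (TensM C x y)) z)"
  define t1 where "t1 = Comp C l (TensM C x (Comp C l (TensM C y z)))"
  define K where "K = Comp C l (TensM C y (Comp C l (TensM C x z)))"
  define \<sigma>1 where "\<sigma>1 = Br C (TensO C A B) D"
  define \<sigma>2 where "\<sigma>2 = Br C (TensO C D A) B"
  define \<rho> where "\<rho> = Br C D A"
  define \<tau> where "\<tau> = Comp C (Comp C (TensM C (Idm C B) \<rho>) \<sigma>2) \<sigma>1"
  have ch: "c \<in> hom C (TensO C L LL) (TensO C L LL)" unfolding c_def LL_def using br_hom[of "TensO C L L" L] by simp
  have Jh: "J \<in> hom C (TensO C L LL) L" unfolding J_def LL_def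
    using comp_hom tens_hom[OF id_hom l_hom] l_hom by blast
  have xy: "TensM C x y \<in> hom C (TensO C A B) LL" unfolding LL_def using tens_hom x y by blast
  have xyz: "TensM C x (TensM C y z) \<in> hom C (TensO C A (TensO C B D)) (TensO C L LL)"
    unfolding LL_def using tens_hom[OF x tens_hom[OF y z]] by simp
  have Ph: "P \<in> hom C (TensO C A (TensO C B D)) (TensO C L LL)" unfolding P_def using xyz .
  have P'h: "TensM C z (TensM C x y) \<in> hom C (TensO C D (TensO C A B)) (TensO C L LL)"
    unfolding LL_def using tens_hom[OF z tens_hom[OF x y]] by simp
  have P''h: "TensM C y (TensM C z x) \<in> hom C (TensO C B (TensO C D A)) (TensO C L LL)"
    unfolding LL_def using tens_hom[OF y tens_hom[OF z x]] by simp
  have s1h: "\<sigma>1 \<in> hom C (TensO C A (TensO C B D)) (TensO C D (TensO C A B))"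
    unfolding \<sigma>1_def using br_hom[of "TensO C A B" D] by simp
  have s2h: "\<sigma>2 \<in> hom C (TensO C D (TensO C A B)) (TensO C B (TensO C D A))"
    unfolding \<sigma>2_def using br_hom[of "TensO C D A" B] by simp
  have rh: "\<rho> \<in> hom C (TensO C D A) (TensO C A D)" unfolding \<rho>_def using br_hom by blast
  have th: "\<tau> \<in> hom C (TensO C A (TensO C B D)) (TensO C B (TensO C A D))"
    unfolding \<tau>_def using comp_hom[OF s1h comp_hom[OF s2h tens_hom[OF id_hom rh]]] by simp
  have Wxy: "Comp C l (TensM C x y) \<in> hom C (TensO C A B) L" using br_hom' x y by blast
  have xz: "Comp C l (TensM C x z) \<in> hom C (TensO C A D) L" using br_hom' x z by blast
  have zx: "Comp C l (TensM C z x) \<in> hom C (TensO C D A) L" using br_hom' x z by blast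
  have yz: "Comp C l (TensM C y z) \<in> hom C (TensO C B D) L" using br_hom' y z by blast
  have Kh: "K \<in> hom C (TensO C B (TensO C A D)) L" unfolding K_def using br_hom'[OF y xz] .
  have Wh: "W \<in> hom C (TensO C A (TensO C B D)) L" unfolding W_def using br_hom'[OF Wxy z] by simp
  have t1h: "t1 \<in> hom C (TensO C A (TensO C B D)) L" unfolding t1_def using br_hom'[OF x yz] .
  have Kt: "Comp C K \<tau> \<in> hom C (TensO C A (TensO C B D)) L" using comp_hom[OF th Kh] .
  have cP: "Comp C c P = Comp C (TensM C z (TensM C x y)) \<sigma>1"
    using br_natural[OF xy z] unfolding c_def P_def \<sigma>1_def by (simp add: tensM_assoc)
  have cP': "Comp C c (TensM C z (TensM C x y)) = Comp C (TensM C y (TensM C z x)) \<sigma>2"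
  proof -
    have zx': "TensM C z x \<in> hom C (TensO C D A) LL" unfolding LL_def using tens_hom z x by blast
    show ?thesis using br_natural[OF zx' y] unfolding c_def \<sigma>2_def by (simp add: tensM_assoc)
  qed
  have T1: "Comp C J P = t1" unfolding J_def P_def t1_def using J_app[OF x y z] .
  have T2: "Comp C (Comp C J c) P = Neg C W"
  proof -
    have "Comp C (Comp C J c) P = Comp C J (Comp C c P)" using comp_assoc[OF Ph ch Jh] by simp
    also have "\<dots> = Comp C (Comp C J (TensM C z (TensM C x y))) \<sigma>1"
      using cP comp_assoc[OF s1h P'h Jh] by simp
    also have "\<dots> = Comp C (Comp C l (TensM C z (Comp C l (TensM C x y)))) \<sigma>1"
      unfolding J_def using J_app[OF z x y] by simp
    also have "\<dots> = Neg C W" unfolding W_def \<sigma>1_def using antisym[OF Wxy z] by simp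
    finally show ?thesis .
  qed
  have T3: "Comp C (Comp C (Comp C J c) c) P = Neg C (Comp C K \<tau>)"
  proof -
    have Jc: "Comp C J c \<in> hom C (TensO C L LL) L" using comp_hom[OF ch Jh] .
    have "Comp C (Comp C (Comp C J c) c) P = Comp C (Comp C J c) (Comp C c P)"
      using comp_assoc[OF Ph ch Jc] by simp
    also have "\<dots> = Comp C (Comp C (Comp C J c) (TensM C z (TensM C x y))) \<sigma>1"
      using cP comp_assoc[OF s1h P'h Jc] by simp
    also have "Comp C (Comp C J c) (TensM C z (TensM C x y)) = Comp C J (Comp C c (TensM C z (TensM C x y)))"
      using comp_assoc[OF P'h ch Jh] by simp
    also have "\<dots> = Comp C (Comp C J (TensM C y (TensM C z x))) \<sigma>2"
      using cP' comp_assoc[OF s2h P''h Jh] by simp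
    also have "Comp C J (TensM C y (TensM C z x)) = Comp C l (TensM C y (Comp C l (TensM C z x)))"
      unfolding J_def using J_app[OF y z x] .
    also have "Comp C l (TensM C z x) = Neg C (Comp C (Comp C l (TensM C x z)) \<rho>)"
      unfolding \<rho>_def using antisym[OF z x] neg_neg[OF zx] by simp
    also have "Comp C l (TensM C y (Neg C (Comp C (Comp C l (TensM C x z)) \<rho>)))
        = Neg C (Comp C l (TensM C (Comp C y (Idm C B)) (Comp C (Comp C l (TensM C x z)) \<rho>)))"
      using tens_neg_right[OF y comp_hom[OF rh xz]] comp_neg_right[OF tens_hom[OF y comp_hom[OF rh xz]] l_hom]
        id_right[OF y] by simp
    also have "Comp C l (TensM C (Comp C y (Idm C B)) (Comp C (Comp C l (TensM C x z)) \<rho>))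
        = Comp C K (TensM C (Idm C B) \<rho>)"
      unfolding K_def using br_pre[OF y id_hom xz rh] .
    finally have "Comp C (Comp C (Comp C J c) c) P
       = Comp C (Comp C (Neg C (Comp C K (TensM C (Idm C B) \<rho>))) \<sigma>2) \<sigma>1" .
    also have "\<dots> = Neg C (Comp C (Comp C (Comp C K (TensM C (Idm C B) \<rho>)) \<sigma>2) \<sigma>1)"
    proof -
      have a1: "TensM C (Idm C B) \<rho> \<in> hom C (TensO C B (TensO C D A)) (TensO C B (TensO C A D))"
        using tens_hom[OF id_hom rh] .
      have a2: "Comp C K (TensM C (Idm C B) \<rho>) \<in> hom C (TensO C B (TensO C D A)) L"
        using comp_hom[OF a1 Kh] .
      have a3: "Comp C a2' \<sigma>2 \<in> hom C (TensO C D (TensO C A B)) L" if "a2' \<in> hom C (TensO C B (TensO C D A)) L" for a2'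
        using comp_hom[OF s2h that] .
      show ?thesis using comp_neg_left[OF s2h a2] comp_neg_left[OF s1h a3[OF a2]] by simp
    qed
    also have "Comp C (Comp C (Comp C K (TensM C (Idm C B) \<rho>)) \<sigma>2) \<sigma>1 = Comp C K \<tau>"
    proof -
      have a1: "TensM C (Idm C B) \<rho> \<in> hom C (TensO C B (TensO C D A)) (TensO C B (TensO C A D))"
        using tens_hom[OF id_hom rh] .
      have "Comp C (Comp C K (TensM C (Idm C B) \<rho>)) \<sigma>2 = Comp C K (Comp C (TensM C (Idm C B) \<rho>) \<sigma>2)"
        using comp_assoc[OF s2h a1 Kh] by simp
      moreover have "Comp C (Comp C K (Comp C (TensM C (Idm C B) \<rho>) \<sigma>2)) \<sigma>1 = Comp C K \<tau>"
        unfolding \<tau>_def using comp_assoc[OF s1h comp_hom[OF s2h a1] Kh] by simp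
      ultimately show ?thesis by simp
    qed
    finally show ?thesis .
  qed
  have "Comp C (Comp C J (Add C (Add C (Idm C (TensO C L LL)) c) (Comp C c c))) P = Zero C (TensO C A (TensO C B D)) L"
    using jac_raw zero_comp[OF Ph] unfolding J_def c_def LL_def by simp
  moreover have "Comp C J (Add C (Add C (Idm C (TensO C L LL)) c) (Comp C c c))
     = Add C (Add C J (Comp C J c)) (Comp C (Comp C J c) c)"
  proof -
    have cc: "Comp C c c \<in> hom C (TensO C L LL) (TensO C L LL)" using comp_hom[OF ch ch] .
    have ic: "Add C (Idm C (TensO C L LL)) c \<in> hom C (TensO C L LL) (TensO C L LL)" using add_hom[OF id_hom ch] .
    show ?thesis using comp_add_right[OF ic cc Jh] comp_add_right[OF id_hom ch Jh] id_right[OF Jh]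
      comp_assoc[OF ch ch Jh] by simp
  qed
  moreover have "Comp C (Add C (Add C J (Comp C J c)) (Comp C (Comp C J c) c)) P
     = Add C (Add C (Comp C J P) (Comp C (Comp C J c) P)) (Comp C (Comp C (Comp C J c) c) P)"
  proof -
    have Jc: "Comp C J c \<in> hom C (TensO C L LL) L" using comp_hom[OF ch Jh] .
    have Jcc: "Comp C (Comp C J c) c \<in> hom C (TensO C L LL) L" using comp_hom[OF ch Jc] .
    show ?thesis using comp_add_left[OF Ph add_hom[OF Jh Jc] Jcc] comp_add_left[OF Ph Jh Jc] by simp
  qed
  ultimately have "Add C (Add C t1 (Neg C W)) (Neg C (Comp C K \<tau>)) = Zero C (TensO C A (TensO C B D)) L"
    using T1 T2 T3 by simp
  then have "W = Add C t1 (Neg C (Comp C K \<tau>))"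
    using solve3[OF t1h Wh neg_hom[OF Kt]] by simp
  then show ?thesis using th unfolding W_def t1_def K_def by blast
qed


lemma TT_hom: "TT C l k \<in> hom C (tpow C (Suc k) (TensO C L L)) L"
proof (induction k)
  case 0 then show ?case using l_hom by simp
next
  case (Suc k)
  have "TensM C l (TT C l k) \<in> hom C (TensO C (TensO C L L) (tpow C (Suc k) (TensO C L L))) (TensO C L L)"
    using tens_hom[OF l_hom Suc.IH] .
  then show ?case using comp_hom l_hom by fastforce
qed

lemma GG_hom: "GG C L l k A f \<Longrightarrow> f \<in> hom C A L"
proof (induction rule: GG.induct)
  case (gen \<phi> A k) then show ?case using comp_hom TT_hom by blast
next
  case (add k A f g) then show ?case using add_hom by blast
next
  case (neg k A f) then show ?case using neg_hom by blast
qed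

lemma GG_pre: "GG C L l k A f \<Longrightarrow> \<phi> \<in> hom C A' A \<Longrightarrow> GG C L l k A' (Comp C f \<phi>)"
proof (induction arbitrary: A' \<phi> rule: GG.induct)
  case (gen \<phi>0 A k)
  have "Comp C (Comp C (TT C l k) \<phi>0) \<phi> = Comp C (TT C l k) (Comp C \<phi>0 \<phi>)"
    using comp_assoc[OF gen.prems gen.hyps TT_hom] by simp
  then show ?case using GG.gen[OF comp_hom[OF gen.prems gen.hyps]] by simp
next
  case (add k A f g)
  have "Comp C (Add C f g) \<phi> = Add C (Comp C f \<phi>) (Comp C g \<phi>)"
    using comp_add_left[OF add.prems GG_hom[OF add.hyps(1)] GG_hom[OF add.hyps(2)]] .
  then show ?case using GG.add[OF add.IH(1)[OF add.prems] add.IH(2)[OF add.prems]] by simp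
next
  case (neg k A f)
  have "Comp C (Neg C f) \<phi> = Neg C (Comp C f \<phi>)"
    using comp_neg_left[OF neg.prems GG_hom[OF neg.hyps]] .
  then show ?case using GG.neg[OF neg.IH[OF neg.prems]] by simp
qed

lemma GG_id: "GG C L l k (tpow C (Suc k) (TensO C L L)) (TT C l k)"
proof -
  have "GG C L l k (tpow C (Suc k) (TensO C L L)) (Comp C (TT C l k) (Idm C (tpow C (Suc k) (TensO C L L))))"
    by (rule GG.gen[OF id_hom])
  then show ?thesis using id_right[OF TT_hom] by simp
qed

lemma lift:
  "GG C L l i A a \<Longrightarrow>
   (\<And>j. GG C L l (Suc (i + j)) (TensO C (tpow C (Suc i) (TensO C L L)) (tpow C (Suc j) (TensO C L L)))
           (Comp C l (TensM C (TT C l i) (TT C l j)))) \<Longrightarrow>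
   GG C L l j B b \<Longrightarrow> GG C L l (Suc (i + j)) (TensO C A B) (Comp C l (TensM C a b))"
proof (induction arbitrary: j B b rule: GG.induct)
  case (gen \<phi> A i)
  note ph = gen.hyps
  note H = gen.prems(1)
  have a: "Comp C (TT C l i) \<phi> \<in> hom C A L" using comp_hom[OF ph TT_hom] .
  from gen.prems(2) show ?case
  proof (induction rule: GG.induct)
    case (gen \<psi> B j)
    have "Comp C l (TensM C (Comp C (TT C l i) \<phi>) (Comp C (TT C l j) \<psi>))
      = Comp C (Comp C l (TensM C (TT C l i) (TT C l j))) (TensM C \<phi> \<psi>)"
      using br_pre[OF TT_hom ph TT_hom gen] .
    then show ?case using GG_pre[OF H[of j] tens_hom[OF ph gen]] by simp
  next
    case (add j B f g)
    have "Comp C l (TensM C (Comp C (TT C l i) \<phi>) (Add C f g))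
       = Add C (Comp C l (TensM C (Comp C (TT C l i) \<phi>) f)) (Comp C l (TensM C (Comp C (TT C l i) \<phi>) g))"
      using tens_add_right[OF a GG_hom[OF add.hyps(1)] GG_hom[OF add.hyps(2)]]
        comp_add_right[OF tens_hom[OF a GG_hom[OF add.hyps(1)]] tens_hom[OF a GG_hom[OF add.hyps(2)]] l_hom] by simp
    then show ?case using GG.add[OF add.IH] by simp
  next
    case (neg j B f)
    have "Comp C l (TensM C (Comp C (TT C l i) \<phi>) (Neg C f))
       = Neg C (Comp C l (TensM C (Comp C (TT C l i) \<phi>) f))"
      using tens_neg_right[OF a GG_hom[OF neg.hyps]]
        comp_neg_right[OF tens_hom[OF a GG_hom[OF neg.hyps]] l_hom] by simp
    then show ?case using GG.neg[OF neg.IH] by simp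
  qed
next
  case (add i A f g)
  have fb: "f \<in> hom C A L" "g \<in> hom C A L" "b \<in> hom C B L"
    using GG_hom add(1,2,6) by blast+
  have "Comp C l (TensM C (Add C f g) b)
       = Add C (Comp C l (TensM C f b)) (Comp C l (TensM C g b))"
    using tens_add_left[OF fb] comp_add_right[OF tens_hom[OF fb(1,3)] tens_hom[OF fb(2,3)] l_hom] by simp
  then show ?case using GG.add[OF add.IH(1)[OF add.prems] add.IH(2)[OF add.prems]] by simp
next
  case (neg i A f)
  have fb: "f \<in> hom C A L" "b \<in> hom C B L" using GG_hom neg(1,4) by blast+
  have "Comp C l (TensM C (Neg C f) b) = Neg C (Comp C l (TensM C f b))"
    using tens_neg_left[OF fb] comp_neg_right[OF tens_hom[OF fb] l_hom] by simp
  then show ?case using GG.neg[OF neg.IH[OF neg.prems]] by simp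
qed

lemma bracket0: "GG C L l 0 A a \<Longrightarrow> GG C L l j B b \<Longrightarrow> GG C L l (Suc j) (TensO C A B) (Comp C l (TensM C a b))"
proof -
  assume a: "GG C L l 0 A a" and b: "GG C L l j B b"
  have "GG C L l (Suc (0 + j)) (TensO C (tpow C (Suc 0) (TensO C L L)) (tpow C (Suc j) (TensO C L L)))
           (Comp C l (TensM C (TT C l 0) (TT C l j)))" for j
    using GG_id[of "Suc j"] by simp
  from lift[OF a this b] show ?thesis by simp
qed

lemma bracket: "GG C L l i A a \<Longrightarrow> GG C L l j B b \<Longrightarrow> GG C L l (Suc (i + j)) (TensO C A B) (Comp C l (TensM C a b))"
proof (induction i arbitrary: j A B a b)
  case 0 then show ?case using bracket0 by simp
next
  case (Suc i)
  have g: "GG C L l (Suc (Suc i + j)) (TensO C (tpow C (Suc (Suc i)) (TensO C L L)) (tpow C (Suc j) (TensO C L L)))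
           (Comp C l (TensM C (TT C l (Suc i)) (TT C l j)))" for j
  proof -
    obtain \<tau> where th: "\<tau> \<in> hom C (TensO C (TensO C L L) (TensO C (tpow C (Suc i) (TensO C L L)) (tpow C (Suc j) (TensO C L L))))
        (TensO C (tpow C (Suc i) (TensO C L L)) (TensO C (TensO C L L) (tpow C (Suc j) (TensO C L L))))"
      and eq: "Comp C l (TensM C (Comp C l (TensM C l (TT C l i))) (TT C l j)) =
        Add C (Comp C l (TensM C l (Comp C l (TensM C (TT C l i) (TT C l j)))))
          (Neg C (Comp C (Comp C l (TensM C (TT C l i) (Comp C l (TensM C l (TT C l j))))) \<tau>))"
      using jac_gen[OF l_hom TT_hom TT_hom] by blast
    have G0: "GG C L l 0 (TensO C L L) l" using GG_id[of 0] by simp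
    have e1: "GG C L l (Suc (Suc (i + j)))
       (TensO C (TensO C L L) (TensO C (tpow C (Suc i) (TensO C L L)) (tpow C (Suc j) (TensO C L L))))
       (Comp C l (TensM C l (Comp C l (TensM C (TT C l i) (TT C l j)))))"
      using bracket0[OF G0 Suc.IH[OF GG_id GG_id]] .
    have e2: "GG C L l (Suc (i + Suc j))
       (TensO C (tpow C (Suc i) (TensO C L L)) (TensO C (TensO C L L) (tpow C (Suc j) (TensO C L L))))
       (Comp C l (TensM C (TT C l i) (Comp C l (TensM C l (TT C l j)))))"
      using Suc.IH[OF GG_id bracket0[OF G0 GG_id]] .
    have e3: "GG C L l (Suc (Suc (i + j)))
       (TensO C (TensO C L L) (TensO C (tpow C (Suc i) (TensO C L L)) (tpow C (Suc j) (TensO C L L))))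
       (Neg C (Comp C (Comp C l (TensM C (TT C l i) (Comp C l (TensM C l (TT C l j))))) \<tau>))"
      using GG.neg[OF GG_pre[OF e2 th]] by simp
    have "GG C L l (Suc (Suc (i + j)))
       (TensO C (TensO C L L) (TensO C (tpow C (Suc i) (TensO C L L)) (tpow C (Suc j) (TensO C L L))))
       (Comp C l (TensM C (Comp C l (TensM C l (TT C l i))) (TT C l j)))"
      using GG.add[OF e1 e3] eq by simp
    then show ?thesis by simp
  qed
  show ?case using lift[OF Suc.prems(1) g Suc.prems(2)] .
qed

lemma nest_mpow: "Comp C (nest C L l m) (mpow C (Suc (Suc m)) l) = TT C l (Suc m)"
proof (induction m)
  case 0
  show ?case using tensM_unit_right by simp
next
  case (Suc m)
  have mh: "mpow C (Suc (Suc m)) l \<in> hom C (tpow C (Suc (Suc m)) (TensO C L L)) (tpow C (Suc (Suc m)) L)"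
    using mpow_hom[OF l_hom] .
  have nh: "nest C L l m \<in> hom C (tpow C (Suc (Suc m)) L) L" using nest_hom[OF l_hom] .
  have il: "TensM C (Idm C L) (nest C L l m) \<in> hom C (TensO C L (tpow C (Suc (Suc m)) L)) (TensO C L L)"
    using tens_hom[OF id_hom nh] .
  have lm: "TensM C l (mpow C (Suc (Suc m)) l) \<in> hom C (TensO C (TensO C L L) (tpow C (Suc (Suc m)) (TensO C L L))) (TensO C L (tpow C (Suc (Suc m)) L))"
    using tens_hom[OF l_hom mh] .
  have "Comp C (nest C L l (Suc m)) (mpow C (Suc (Suc (Suc m))) l)
      = Comp C l (Comp C (TensM C (Idm C L) (nest C L l m)) (TensM C l (mpow C (Suc (Suc m)) l)))"
    using comp_assoc[OF lm il l_hom] by simp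
  also have "Comp C (TensM C (Idm C L) (nest C L l m)) (TensM C l (mpow C (Suc (Suc m)) l))
     = TensM C (Comp C (Idm C L) l) (Comp C (nest C L l m) (mpow C (Suc (Suc m)) l))"
    using tens_comp[OF l_hom id_hom mh nh] by simp
  finally show ?case using Suc.IH id_left[OF l_hom] by simp
qed

lemma GG_zero: "GG C L l k A f \<Longrightarrow> TT C l k = Zero C (tpow C (Suc k) (TensO C L L)) L \<Longrightarrow> f = Zero C A L"
proof (induction rule: GG.induct)
  case (gen \<phi> A k) then show ?case using zero_comp by simp
next
  case (add k A f g) then show ?case using add_zero zero_hom by simp
next
  case (neg k A f) then show ?case using neg_zero by simp
qed

lemma dnest_GG: "GG C L l (2 ^ k - 1) (tpow C (2 ^ Suc k) L) (dnest C l k)"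
proof (induction k)
  case 0 then show ?case using GG_id[of 0] by (simp add: numeral_2_eq_2)
next
  case (Suc k)
  have "GG C L l (Suc ((2 ^ k - 1) + (2 ^ k - 1))) (TensO C (tpow C (2 ^ Suc k) L) (tpow C (2 ^ Suc k) L))
     (Comp C l (TensM C (dnest C l k) (dnest C l k)))" using bracket[OF Suc.IH Suc.IH] .
  moreover have "Suc ((2 ^ k - 1) + (2 ^ k - 1)) = 2 ^ Suc k - (1::nat)"
  proof -
    have "(1::nat) \<le> 2 ^ k" by simp
    moreover have "2 ^ Suc k = 2 * (2::nat) ^ k" by simp
    ultimately show ?thesis by linarith
  qed
  moreover have "TensO C (tpow C (2 ^ Suc k) L) (tpow C (2 ^ Suc k) L) = tpow C (2 ^ Suc (Suc k)) L"
    using tpow_add[of "2 ^ Suc k" L "2 ^ Suc k"] by simp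
  ultimately show ?case by simp
qed

end

theorem mainTheorem1:
  fixes C :: "('o, 'm) smcat" and L :: 'o and l :: 'm
  assumes "add_sym_mon_cat C"
    and "lie_algebra C L l"
    and "derived_nilpotent C L l"
  shows "solvable C L l"
proof -
  interpret lie_ctx C L l using assms(1,2) by (simp add: lie_ctx_def lie_ctx_axioms_def)
  obtain N where N: "\<And>n. n \<ge> N \<Longrightarrow> Comp C (hpow C L l n) (mpow C n l) = Zero C (tpow C n (TensO C L L)) L"
    using assms(3) unfolding derived_nilpotent_def by blast
  have "\<forall>n\<ge>N + 4. dpow C l n = Zero C (tpow C (2 ^ (n - 1)) L) L"
  proof (intro allI impI)
    fix n assume n: "N + 4 \<le> n"
    define k where "k = n - 2"
    define m where "m = 2 ^ k - (2::nat)"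
    have kk: "k < 2 ^ k" by (rule less_exp)
    have sm: "Suc (Suc m) = 2 ^ k" unfolding m_def using kk n k_def by linarith
    have sm1: "Suc m = 2 ^ k - 1" using sm by simp
    have "TT C l (Suc m) = Comp C (hpow C L l (Suc (Suc m))) (mpow C (Suc (Suc m)) l)"
      using nest_mpow[of m] by (simp add: hpow_def)
    also have "\<dots> = Zero C (tpow C (Suc (Suc m)) (TensO C L L)) L"
      using N[of "Suc (Suc m)"] sm kk n k_def by linarith
    finally have z: "TT C l (2 ^ k - 1) = Zero C (tpow C (Suc (2 ^ k - 1)) (TensO C L L)) L"
      using sm1 by simp
    have "dnest C l k = Zero C (tpow C (2 ^ Suc k) L) L" using GG_zero[OF dnest_GG z] .
    moreover have "Suc k = n - 1" "dpow C l n = dnest C l k" using n unfolding k_def dpow_def by auto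
    ultimately show "dpow C l n = Zero C (tpow C (2 ^ (n - 1)) L) L" by simp
  qed
  then show ?thesis unfolding solvable_def by blast
qed

end
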